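(* Let $\mathfrak g=\mathfrak k\oplus\mathfrak m$ be a Pauli-spanned Cartan decomposition, and let $b_1\neq b_2$ be two commuting Pauli strings in $\tilde{\mathfrak m}$ lying in the same connected component of the frustration graph of $\mathfrak g$. Then $|\tilde{\mathfrak k}^1_2|=|\tilde{\mathfrak k}^2_1|$.
   Context: Pauli strings on $n$ qubits are tensor products of $I,X,Y,Z$, not all identity; two Pauli strings either commute or anticommute. A Pauli-spanned Cartan decomposition is $\mathfrak g=\mathfrak k\oplus\mathfrak m\subseteq\mathfrak{su}(2^n)$ with $\mathfrak k=\mathrm{span}_{i\mathbb R}\tilde{\mathfrak k}$, $\mathfrak m=\mathrm{span}_{i\mathbb R}\tilde{\mathfrak m}$, $\mathfrak g=\mathrm{span}_{i\mathbb R}\tilde{\mathfrak g}$ with $\tilde{\mathfrak g}=\tilde{\mathfrak k}\sqcup\tilde{\mathfrak m}$ the set of all Pauli strings (up to phase) $\sigma$ with $i\sigma\in\mathfrak g$, and $[\mathfrak k,\mathfrak k]\subseteq\mathfrak k$, $[\mathfrak m,\mathfrak m]\subseteq\mathfrak k$, $[\mathfrak k,\mathfrak m]\subseteq\mathfrak m$. The frustration graph of $\mathfrak g$ has vertex set $\tilde{\mathfrak g}$, with edges between anticommuting pairs. For Pauli strings $b_1,b_2,\dots$ and disjoint index lists, $\tilde{\mathfrak k}^{i_1i_2\dots}_{j_1j_2\dots}$ is the set of $k\in\tilde{\mathfrak k}$ anticommuting with every $b_{i_p}$ and commuting with every $b_{j_q}$ (no condition on other indices). *)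

theory Defs
  imports Main
begin

text \<open>Single-qubit Paulis (up to phase).\<close>
datatype pauli = PI | PX | PY | PZ

fun pmul :: "pauli \<Rightarrow> pauli \<Rightarrow> pauli" where
  "pmul PI a = a"
| "pmul a PI = a"
| "pmul PX PX = PI" | "pmul PY PY = PI" | "pmul PZ PZ = PI"
| "pmul PX PY = PZ" | "pmul PY PX = PZ"
| "pmul PY PZ = PX" | "pmul PZ PY = PX"
| "pmul PZ PX = PY" | "pmul PX PZ = PY"

definition pauli_strings :: "nat \<Rightarrow> (nat \<Rightarrow> pauli) set" where
  "pauli_strings n = {p. (\<forall>i\<ge>n. p i = PI) \<and> (\<exists>i<n. p i \<noteq> PI)}"

definition smul :: "(nat \<Rightarrow> pauli) \<Rightarrow> (nat \<Rightarrow> pauli) \<Rightarrow> (nat \<Rightarrow> pauli)" where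
  "smul p q = (\<lambda>i. pmul (p i) (q i))"

definition anticommute :: "nat \<Rightarrow> (nat \<Rightarrow> pauli) \<Rightarrow> (nat \<Rightarrow> pauli) \<Rightarrow> bool" where
  "anticommute n p q \<longleftrightarrow> odd (card {i. i < n \<and> p i \<noteq> PI \<and> q i \<noteq> PI \<and> p i \<noteq> q i})"

text \<open>[span_iR A, span_iR B] \<subseteq> span_iR C for sets of Pauli strings: for
  Pauli strings, [i a, i b] = 0 if a,b commute and is a nonzero multiple of i(ab)
  if they anticommute; distinct Pauli strings are linearly independent.\<close>
definition bracket_in :: "nat \<Rightarrow> (nat \<Rightarrow> pauli) set \<Rightarrow> (nat \<Rightarrow> pauli) set \<Rightarrow> (nat \<Rightarrow> pauli) set \<Rightarrow> bool" where
  "bracket_in n A B C \<longleftrightarrow> (\<forall>a\<in>A. \<forall>b\<in>B. anticommute n a b \<longrightarrow> smul a b \<in> C)"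

text \<open>Pauli-spanned Cartan decomposition g = k \<oplus> m, given by the Pauli bases K, M.\<close>
definition pauli_cartan :: "nat \<Rightarrow> (nat \<Rightarrow> pauli) set \<Rightarrow> (nat \<Rightarrow> pauli) set \<Rightarrow> bool" where
  "pauli_cartan n K M \<longleftrightarrow> K \<subseteq> pauli_strings n \<and> M \<subseteq> pauli_strings n \<and> K \<inter> M = {}
     \<and> bracket_in n K K K \<and> bracket_in n M M K \<and> bracket_in n K M M"

definition frustration_edge :: "nat \<Rightarrow> (nat \<Rightarrow> pauli) set \<Rightarrow> (nat \<Rightarrow> pauli) \<Rightarrow> (nat \<Rightarrow> pauli) \<Rightarrow> bool" where
  "frustration_edge n G a b \<longleftrightarrow> a \<in> G \<and> b \<in> G \<and> anticommute n a b"

definition same_component :: "nat \<Rightarrow> (nat \<Rightarrow> pauli) set \<Rightarrow> (nat \<Rightarrow> pauli) \<Rightarrow> (nat \<Rightarrow> pauli) \<Rightarrow> bool" where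
  "same_component n G a b \<longleftrightarrow> a \<in> G \<and> b \<in> G \<and> (frustration_edge n G)\<^sup>*\<^sup>* a b"

text \<open>k^{A}_{B}: elements of K anticommuting with all of A and commuting with all of B.\<close>
definition k_sub :: "nat \<Rightarrow> (nat \<Rightarrow> pauli) set \<Rightarrow> (nat \<Rightarrow> pauli) set \<Rightarrow> (nat \<Rightarrow> pauli) set \<Rightarrow> (nat \<Rightarrow> pauli) set" where
  "k_sub n K A B = {k \<in> K. (\<forall>a\<in>A. anticommute n k a) \<and> (\<forall>b\<in>B. \<not> anticommute n k b)}"

end

theory Submission
  imports Defs
begin

lemma odd_card_Suc:
  "odd (card {i. i < Suc n \<and> P i}) \<longleftrightarrow> (odd (card {i. i < n \<and> P i}) \<noteq> P n)"
proof -
  have fin: "finite {i. i < n \<and> P i}" by simp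
  show ?thesis
  proof (cases "P n")
    case True
    then have "{i. i < Suc n \<and> P i} = insert n {i. i < n \<and> P i}" by auto
    then show ?thesis using True fin by simp
  next
    case False
    then have "{i. i < Suc n \<and> P i} = {i. i < n \<and> P i}" using less_Suc_eq by auto
    then show ?thesis using False by simp
  qed
qed

lemma pmul_site:
  "(pmul x y \<noteq> PI \<and> z \<noteq> PI \<and> pmul x y \<noteq> z) \<longleftrightarrow>
   ((x \<noteq> PI \<and> z \<noteq> PI \<and> x \<noteq> z) \<noteq> (y \<noteq> PI \<and> z \<noteq> PI \<and> y \<noteq> z))"
  by (cases x; cases y; cases z) auto

lemma ac_mul_left_gen:
  "odd (card {i. i < n \<and> smul p q i \<noteq> PI \<and> r i \<noteq> PI \<and> smul p q i \<noteq> r i}) \<longleftrightarrow>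
   (odd (card {i. i < n \<and> p i \<noteq> PI \<and> r i \<noteq> PI \<and> p i \<noteq> r i}) \<noteq>
    odd (card {i. i < n \<and> q i \<noteq> PI \<and> r i \<noteq> PI \<and> q i \<noteq> r i}))"
proof (induction n)
  case 0
  then show ?case by simp
next
  case (Suc n)
  show ?case
    apply (subst odd_card_Suc)+
    using Suc pmul_site[of "p n" "q n" "r n"] unfolding smul_def by auto
qed

lemma ac_mul_left: "anticommute n (smul p q) r \<longleftrightarrow> (anticommute n p r \<noteq> anticommute n q r)"
  unfolding anticommute_def by (rule ac_mul_left_gen)

lemma ac_sym: "anticommute n p q = anticommute n q p"
proof -
  have "{i. i < n \<and> p i \<noteq> PI \<and> q i \<noteq> PI \<and> p i \<noteq> q i} = {i. i < n \<and> q i \<noteq> PI \<and> p i \<noteq> PI \<and> q i \<noteq> p i}"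
    by auto
  then show ?thesis unfolding anticommute_def by simp
qed

lemma ac_self: "\<not> anticommute n p p"
  unfolding anticommute_def by simp

lemma ac_mul_right: "anticommute n r (smul p q) \<longleftrightarrow> (anticommute n r p \<noteq> anticommute n r q)"
  using ac_mul_left ac_sym by metis

lemma pmul_cancel: "pmul x (pmul x y) = y"
  by (cases x; cases y) auto
lemma pmul_cancel2: "pmul (pmul x y) x = y"
  by (cases x; cases y) auto

lemma smul_cancel: "smul p (smul p q) = q"
  unfolding smul_def by (simp add: pmul_cancel)
lemma smul_cancel2: "smul (smul p q) p = q"
  unfolding smul_def by (simp add: pmul_cancel2)

lemma finite_pauli_UNIV: "finite (UNIV :: pauli set)"
proof -
  have "(UNIV :: pauli set) = {PI, PX, PY, PZ}" using pauli.exhaust by auto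
  moreover have "finite {PI, PX, PY, PZ}" by simp
  ultimately show ?thesis by metis
qed

lemma finite_pauli_strings: "finite (pauli_strings n)"
proof -
  let ?f = "\<lambda>p::nat \<Rightarrow> pauli. map p [0..<n]"
  have inj: "inj_on ?f (pauli_strings n)"
  proof (rule inj_onI)
    fix p q assume p: "p \<in> pauli_strings n" and q: "q \<in> pauli_strings n" and e: "?f p = ?f q"
    show "p = q"
    proof
      fix i
      show "p i = q i"
      proof (cases "i < n")
        case True
        then have "?f p ! i = ?f q ! i" using e by simp
        then show ?thesis using True by simp
      next
        case False
        then show ?thesis using p q unfolding pauli_strings_def by auto
      qed
    qed
  qed
  have "?f ` pauli_strings n \<subseteq> {xs. set xs \<subseteq> UNIV \<and> length xs = n}" by auto
  moreover have "finite {xs. set xs \<subseteq> (UNIV :: pauli set) \<and> length xs = n}"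
    using finite_lists_length_eq[OF finite_pauli_UNIV] by simp
  ultimately have "finite (?f ` pauli_strings n)" by (rule finite_subset)
  then show ?thesis using inj finite_imageD by blast
qed

definition NN :: "nat \<Rightarrow> (nat \<Rightarrow> pauli) set \<Rightarrow> (nat \<Rightarrow> pauli) \<Rightarrow> nat" where
  "NN n K b = card {k \<in> K. anticommute n k b}"

lemma invariance:
  assumes cart: "pauli_cartan n K M" and a: "a \<in> K" and ab: "anticommute n a b"
  shows "NN n K (smul a b) = NN n K b"
proof -
  define f where "f k = (if anticommute n a k then smul a k else k)" for k
  have KK: "bracket_in n K K K" using cart unfolding pauli_cartan_def by blast
  have fK: "f k \<in> K" if "k \<in> K" for k
    using that KK a unfolding f_def bracket_in_def by auto
  have ff: "f (f k) = k" for k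
  proof (cases "anticommute n a k")
    case True
    then have "anticommute n a (smul a k)" by (simp add: ac_mul_right ac_self)
    then show ?thesis using True unfolding f_def by (simp add: smul_cancel)
  qed (simp add: f_def)
  have fac: "anticommute n (f k) (smul a b) = anticommute n k b" for k
  proof (cases "anticommute n a k")
    case True
    then show ?thesis unfolding f_def using ab
      by (simp add: ac_mul_left ac_mul_right ac_self ac_sym[of n k a])
  next
    case False
    then show ?thesis unfolding f_def
      by (simp add: ac_mul_right ac_sym[of n k a])
  qed
  have fac2: "anticommute n (f k) b = anticommute n k (smul a b)" for k
    using fac[of "f k"] ff[of k] by simp
  have "bij_betw f {k \<in> K. anticommute n k b} {k \<in> K. anticommute n k (smul a b)}"
    proof (rule bij_betw_byWitness[where f'=f])
    show "\<forall>x\<in>{k \<in> K. anticommute n k b}. f (f x) = x" using ff by blast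
    show "\<forall>x\<in>{k \<in> K. anticommute n k (smul a b)}. f (f x) = x" using ff by blast
    show "f ` {k \<in> K. anticommute n k b} \<subseteq> {k \<in> K. anticommute n k (smul a b)}"
      using fK fac by blast
    show "f ` {k \<in> K. anticommute n k (smul a b)} \<subseteq> {k \<in> K. anticommute n k b}"
      using fK fac2 by blast
  qed
  then show ?thesis unfolding NN_def by (metis bij_betw_same_card)
qed

lemma main_path:
  assumes cart: "pauli_cartan n K M" and b': "b' \<in> M"
  shows "\<forall>b. b \<in> M \<longrightarrow> (frustration_edge n (K \<union> M) ^^ m) b b' \<longrightarrow> NN n K b = NN n K b'"
proof (induction m rule: less_induct)
  case (less m)
  let ?E = "frustration_edge n (K \<union> M)"
  have KM: "bracket_in n K M M" and MM: "bracket_in n M M K" and disj: "K \<inter> M = {}"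
    using cart unfolding pauli_cartan_def by auto
  show ?case
  proof (intro allI impI)
    fix b assume bM: "b \<in> M" and path: "(?E ^^ m) b b'"
    show "NN n K b = NN n K b'"
    proof (cases m)
      case 0
      then show ?thesis using path by simp
    next
      case (Suc m1)
      then obtain v1 where e1: "?E b v1" and p1: "(?E ^^ m1) v1 b'"
        using path relpowp_Suc_D2 by metis
      have acb1: "anticommute n b v1" using e1 unfolding frustration_edge_def by simp
      have v1KM: "v1 \<in> K \<union> M" using e1 unfolding frustration_edge_def by simp
      show ?thesis
      proof (cases "v1 \<in> M")
        case True
        define a where "a = smul b v1"
        have aK: "a \<in> K" using MM bM True acb1 unfolding bracket_in_def a_def by blast
        have "anticommute n a b" unfolding a_def
          by (simp add: ac_mul_left ac_self ac_sym[of n v1 b] acb1)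
        then have "NN n K (smul a b) = NN n K b" using invariance[OF cart aK] by simp
        moreover have "smul a b = v1" unfolding a_def by (rule smul_cancel2)
        moreover have "NN n K v1 = NN n K b'" using less.IH[of m1] Suc True p1 by simp
        ultimately show ?thesis by simp
      next
        case False
        then have v1K: "v1 \<in> K" using v1KM by simp
        define c where "c = smul v1 b"
        have acv1b: "anticommute n v1 b" using acb1 ac_sym by metis
        have cM: "c \<in> M" using KM v1K bM acv1b unfolding bracket_in_def c_def by blast
        have Nc: "NN n K c = NN n K b" unfolding c_def using invariance[OF cart v1K acv1b] .
        have "m1 \<noteq> 0" using p1 False b' by (cases m1) auto
        then obtain m2 where m12: "m1 = Suc m2" by (cases m1) auto
        then obtain v2 where e2: "?E v1 v2" and p2: "(?E ^^ m2) v2 b'"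
          using p1 relpowp_Suc_D2 by metis
        have v2KM: "v2 \<in> K \<union> M" and acv12: "anticommute n v1 v2"
          using e2 unfolding frustration_edge_def by auto
        have bKM: "b \<in> K \<union> M" and cKM: "c \<in> K \<union> M" using bM cM by auto
        have lt: "Suc m2 < m" using Suc m12 by simp
        show ?thesis
        proof (cases "anticommute n b v2")
          case True
          then have "?E b v2" using bKM v2KM unfolding frustration_edge_def by simp
          then have "(?E ^^ Suc m2) b b'" using p2 by (meson relpowp_Suc_I2)
          then show ?thesis using less.IH[OF lt] bM by blast
        next
          case False
          then have "anticommute n c v2" unfolding c_def using acv12
            by (simp add: ac_mul_left)
          then have "?E c v2" using cKM v2KM unfolding frustration_edge_def by simp
          then have "(?E ^^ Suc m2) c b'" using p2 by (meson relpowp_Suc_I2)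
          then have "NN n K c = NN n K b'" using less.IH[OF lt] cM by blast
          then show ?thesis using Nc by simp
        qed
      qed
    qed
  qed
qed

theorem lemmaC1:
  fixes n :: nat and K M :: "(nat \<Rightarrow> pauli) set" and b1 b2 :: "nat \<Rightarrow> pauli"
  assumes "pauli_cartan n K M"
    and "b1 \<in> M" and "b2 \<in> M" and "b1 \<noteq> b2"
    and "\<not> anticommute n b1 b2"
    and "same_component n (K \<union> M) b1 b2"
  shows "card (k_sub n K {b1} {b2}) = card (k_sub n K {b2} {b1})"
proof -
  obtain m where "(frustration_edge n (K \<union> M) ^^ m) b1 b2"
    using assms(6) unfolding same_component_def by (metis rtranclp_power)
  then have NE: "NN n K b1 = NN n K b2" using main_path[OF assms(1) assms(3)] assms(2) by blast
  have finK: "finite K" using assms(1) finite_pauli_strings unfolding pauli_cartan_def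
    by (meson finite_subset)
  let ?C = "{k \<in> K. anticommute n k b1 \<and> anticommute n k b2}"
  have s1: "{k \<in> K. anticommute n k b1} = k_sub n K {b1} {b2} \<union> ?C"
    unfolding k_sub_def by auto
  have s2: "{k \<in> K. anticommute n k b2} = k_sub n K {b2} {b1} \<union> ?C"
    unfolding k_sub_def by auto
  have f1: "finite (k_sub n K {b1} {b2})" "finite (k_sub n K {b2} {b1})" "finite ?C"
    using finK unfolding k_sub_def by auto
  have "NN n K b1 = card (k_sub n K {b1} {b2}) + card ?C"
    unfolding NN_def s1 by (rule card_Un_disjoint) (use f1 in \<open>auto simp: k_sub_def\<close>)
  moreover have "NN n K b2 = card (k_sub n K {b2} {b1}) + card ?C"
    unfolding NN_def s2 by (rule card_Un_disjoint) (use f1 in \<open>auto simp: k_sub_def\<close>)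
  ultimately show ?thesis using NE by simp
qed

end
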